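(* Let $X$ be a set of $n$ elements and let $\mathcal{P}$ be a family of subsets of $X$. Let $d \geq 1$ and $\delta \geq 1$ be integers such that the VC-dimension of $\mathcal{P}$ is at most $d$ and $|\Delta(S,T)| \geq \delta$ for all distinct $S, T \in \mathcal{P}$. Assume that $s = \frac{4dn}{\delta}$ is an integer with $s \leq n$. Let $A'$ be a subset of $X$ of size $s-1$ chosen uniformly at random among all $(s-1)$-element subsets of $X$. Then $$|\mathcal{P}| \leq 2 \cdot \mathbf{E}\big[\,|\mathcal{P}_{|A'}|\,\big].$$
   Context: For sets $R, S$, $\Delta(R,S) = (R \setminus S) \cup (S \setminus R)$ denotes the symmetric difference. For $Y \subseteq X$, the projection (trace) of $\mathcal{P}$ on $Y$ is $\mathcal{P}_{|Y} = \{ S \cap Y : S \in \mathcal{P}\}$, and $|\mathcal{P}_{|Y}|$ is the number of distinct sets in it. The VC-dimension of $\mathcal{P}$ is the largest size of a set $Y \subseteq X$ with $\mathcal{P}_{|Y} = 2^Y$. *)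

theory Defs
  imports "HOL-Probability.Probability"
begin

definition symdiff :: "'a set \<Rightarrow> 'a set \<Rightarrow> 'a set" where
  "symdiff R S = (R - S) \<union> (S - R)"

definition proj :: "'a set set \<Rightarrow> 'a set \<Rightarrow> 'a set set" where
  "proj P Y = {S \<inter> Y | S. S \<in> P}"

definition shatters :: "'a set set \<Rightarrow> 'a set \<Rightarrow> bool" where
  "shatters P Y \<longleftrightarrow> proj P Y = Pow Y"

text \<open>VC-dimension of a family P of subsets of ground set X: the largest size
  of a shattered subset of X (0 if there is none; X is assumed finite).\<close>
definition vc_dim :: "'a set \<Rightarrow> 'a set set \<Rightarrow> nat" where
  "vc_dim X P = Sup {card Y | Y. Y \<subseteq> X \<and> shatters P Y}"

end

theory Submission
  imports Defs
begin


lemma shatters_iff: "shatters P Y \<longleftrightarrow> (\<forall>Z\<subseteq>Y. \<exists>S\<in>P. S \<inter> Y = Z)"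
proof
  assume "shatters P Y"
  then have e: "{S \<inter> Y | S. S \<in> P} = Pow Y" unfolding shatters_def proj_def .
  show "\<forall>Z\<subseteq>Y. \<exists>S\<in>P. S \<inter> Y = Z"
  proof (intro allI impI)
    fix Z assume "Z \<subseteq> Y"
    then have "Z \<in> {S \<inter> Y | S. S \<in> P}" unfolding e by simp
    then show "\<exists>S\<in>P. S \<inter> Y = Z" by blast
  qed
next
  assume h: "\<forall>Z\<subseteq>Y. \<exists>S\<in>P. S \<inter> Y = Z"
  have "{S \<inter> Y | S. S \<in> P} = Pow Y"
  proof (rule subset_antisym)
    show "{S \<inter> Y | S. S \<in> P} \<subseteq> Pow Y" by blast
    show "Pow Y \<subseteq> {S \<inter> Y | S. S \<in> P}"
    proof
      fix Z assume "Z \<in> Pow Y"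
      then obtain S where "S \<in> P" "S \<inter> Y = Z" using h by blast
      then show "Z \<in> {S \<inter> Y | S. S \<in> P}" by blast
    qed
  qed
  then show "shatters P Y" unfolding shatters_def proj_def .
qed

definition EW :: "'a set \<Rightarrow> ('a set \<Rightarrow> nat) \<Rightarrow> nat" where
  "EW A c = (\<Sum>a\<in>A. \<Sum>R\<in>Pow (A - {a}). min (c R) (c (insert a R)))"

lemma pow_insert_sum:
  assumes "finite B" "x \<notin> B"
  shows "(\<Sum>R\<in>Pow (insert x B). g R) = (\<Sum>T\<in>Pow B. g T + g (insert x T))"
proof -
  have inj: "inj_on (insert x) (Pow B)" unfolding inj_on_def using assms(2) by (metis PowD insert_ident subsetD)
  have disj: "Pow B \<inter> insert x ` Pow B = {}" using assms(2) by auto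
  have "(\<Sum>R\<in>Pow (insert x B). g R) = (\<Sum>R\<in>Pow B. g R) + (\<Sum>R\<in>insert x ` Pow B. g R)"
    unfolding Pow_insert using assms(1) disj by (intro sum.union_disjoint) auto
  also have "(\<Sum>R\<in>insert x ` Pow B. g R) = (\<Sum>T\<in>Pow B. g (insert x T))"
    using sum.reindex[OF inj] by simp
  finally show ?thesis by (simp add: sum.distrib)
qed

lemma minmax_ineq: "min (a::nat) b + min p q \<le> min (max a p) (max b q) + min (min a p) (min b q)"
  by (simp add: min_def max_def)

lemma ew_bound:
  assumes "finite A"
  shows "\<And>c d. {Q. c Q \<noteq> 0} \<subseteq> Pow A \<Longrightarrow>
     (\<And>Y. Y \<subseteq> A \<Longrightarrow> shatters {Q. c Q \<noteq> 0} Y \<Longrightarrow> card Y \<le> d) \<Longrightarrow>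
     EW A c \<le> d * (\<Sum>Q\<in>Pow A. c Q)"
  using assms
proof (induction A rule: finite_induct)
  case empty
  then show ?case by (simp add: EW_def)
next
  case (insert x B c d)
  define c1 where "c1 T = (if T \<subseteq> B then max (c T) (c (insert x T)) else 0)" for T
  define c2 where "c2 T = (if T \<subseteq> B then min (c T) (c (insert x T)) else 0)" for T
  have sup1: "{Q. c1 Q \<noteq> 0} \<subseteq> Pow B" unfolding c1_def by auto
  have sup2: "{Q. c2 Q \<noteq> 0} \<subseteq> Pow B" unfolding c2_def by auto
  have sh1: "card Y \<le> d" if YB: "Y \<subseteq> B" and shY: "shatters {Q. c1 Q \<noteq> 0} Y" for Y
  proof -
    have "shatters {Q. c Q \<noteq> 0} Y"
      unfolding shatters_iff
    proof (intro allI impI)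
      fix Z assume "Z \<subseteq> Y"
      then obtain T where T: "c1 T \<noteq> 0" "T \<inter> Y = Z" using shY unfolding shatters_iff by blast
      have "x \<notin> Y" using YB insert.hyps(2) by auto
      show "\<exists>S\<in>{Q. c Q \<noteq> 0}. S \<inter> Y = Z"
      proof (cases "c T \<noteq> 0")
        case True then show ?thesis using T by auto
      next
        case False
        then have "c (insert x T) \<noteq> 0" using T(1) unfolding c1_def by (auto split: if_splits)
        moreover have "insert x T \<inter> Y = Z" using T(2) \<open>x \<notin> Y\<close> by auto
        ultimately show ?thesis by auto
      qed
    qed
    then show ?thesis using insert.prems(2) YB by auto
  qed
  have sh2: "card (insert x Y) \<le> d" if YB: "Y \<subseteq> B" and shY: "shatters {Q. c2 Q \<noteq> 0} Y" for Y
  proof -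
    have "shatters {Q. c Q \<noteq> 0} (insert x Y)"
      unfolding shatters_iff
    proof (intro allI impI)
      fix Z assume Z: "Z \<subseteq> insert x Y"
      have "Z - {x} \<subseteq> Y" using Z by blast
      then obtain T where T: "c2 T \<noteq> 0" "T \<inter> Y = Z - {x}" using shY unfolding shatters_iff
        by blast
      have TB: "T \<subseteq> B" and c12: "c T \<noteq> 0" "c (insert x T) \<noteq> 0"
        using T(1) unfolding c2_def by (auto split: if_splits)
      have "x \<notin> T" using TB insert.hyps(2) by auto
      show "\<exists>S\<in>{Q. c Q \<noteq> 0}. S \<inter> insert x Y = Z"
      proof (cases "x \<in> Z")
        case True
        have "insert x T \<inter> insert x Y = Z" using T(2) True Z by auto
        then show ?thesis using c12 by auto
      next
        case False
        have "T \<inter> insert x Y = Z" using T(2) False \<open>x \<notin> T\<close> by auto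
        then show ?thesis using c12 by auto
      qed
    qed
    moreover have "insert x Y \<subseteq> insert x B" using YB by blast
    ultimately show ?thesis using insert.prems(2) by blast
  qed
  have sh2': "card Y \<le> d - 1" if "Y \<subseteq> B" "shatters {Q. c2 Q \<noteq> 0} Y" for Y
  proof -
    have "finite Y" using that(1) insert.hyps(1) finite_subset by blast
    moreover have "x \<notin> Y" using that(1) insert.hyps(2) by auto
    ultimately show ?thesis using sh2[OF that] by simp
  qed
  have IH1: "EW B c1 \<le> d * (\<Sum>Q\<in>Pow B. c1 Q)" by (rule insert.IH[OF sup1 sh1])
  have IH2: "EW B c2 \<le> (d - 1) * (\<Sum>Q\<in>Pow B. c2 Q)" by (rule insert.IH[OF sup2 sh2'])
  have split: "EW (insert x B) c = (\<Sum>R\<in>Pow B. min (c R) (c (insert x R)))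
      + (\<Sum>a\<in>B. \<Sum>R\<in>Pow (insert x B - {a}). min (c R) (c (insert a R)))"
    unfolding EW_def using insert.hyps by (simp add: insert_Diff_if)
  have first: "(\<Sum>R\<in>Pow B. min (c R) (c (insert x R))) = (\<Sum>Q\<in>Pow B. c2 Q)"
    unfolding c2_def by (intro sum.cong) auto
  have second: "(\<Sum>a\<in>B. \<Sum>R\<in>Pow (insert x B - {a}). min (c R) (c (insert a R)))
      \<le> EW B c1 + EW B c2"
  proof -
    have "(\<Sum>a\<in>B. \<Sum>R\<in>Pow (insert x B - {a}). min (c R) (c (insert a R)))
       = (\<Sum>a\<in>B. \<Sum>T\<in>Pow (B - {a}). min (c T) (c (insert a T)) + min (c (insert x T)) (c (insert a (insert x T))))"
    proof (rule sum.cong[OF refl])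
      fix a assume "a \<in> B"
      then have "insert x B - {a} = insert x (B - {a})" using insert.hyps(2) by auto
      then show "(\<Sum>R\<in>Pow (insert x B - {a}). min (c R) (c (insert a R))) =
        (\<Sum>T\<in>Pow (B - {a}). min (c T) (c (insert a T)) + min (c (insert x T)) (c (insert a (insert x T))))"
        using pow_insert_sum[of "B - {a}" x "\<lambda>R. min (c R) (c (insert a R))"] insert.hyps by simp
    qed
    also have "\<dots> \<le> (\<Sum>a\<in>B. \<Sum>T\<in>Pow (B - {a}). min (c1 T) (c1 (insert a T)) + min (c2 T) (c2 (insert a T)))"
    proof (intro sum_mono)
      fix a T assume a: "a \<in> B" and T: "T \<in> Pow (B - {a})"
      have "T \<subseteq> B" "insert a T \<subseteq> B" using a T by auto
      then have e: "c1 T = max (c T) (c (insert x T))" "c2 T = min (c T) (c (insert x T))"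
        "c1 (insert a T) = max (c (insert a T)) (c (insert a (insert x T)))"
        "c2 (insert a T) = min (c (insert a T)) (c (insert a (insert x T)))"
        unfolding c1_def c2_def by (auto simp: insert_commute)
      show "min (c T) (c (insert a T)) + min (c (insert x T)) (c (insert a (insert x T)))
        \<le> min (c1 T) (c1 (insert a T)) + min (c2 T) (c2 (insert a T))"
        unfolding e by (rule minmax_ineq)
    qed
    also have "\<dots> = EW B c1 + EW B c2" unfolding EW_def by (simp add: sum.distrib)
    finally show ?thesis .
  qed
  have total: "(\<Sum>Q\<in>Pow (insert x B). c Q) = (\<Sum>Q\<in>Pow B. c1 Q) + (\<Sum>Q\<in>Pow B. c2 Q)"
  proof -
    have "(\<Sum>Q\<in>Pow (insert x B). c Q) = (\<Sum>T\<in>Pow B. c T + c (insert x T))"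
      by (rule pow_insert_sum[OF insert.hyps])
    also have "\<dots> = (\<Sum>T\<in>Pow B. c1 T + c2 T)"
      unfolding c1_def c2_def by (intro sum.cong) auto
    finally show ?thesis by (simp add: sum.distrib)
  qed
  have dcase: "d \<ge> 1 \<or> (\<Sum>Q\<in>Pow B. c2 Q) = 0"
  proof (cases "(\<Sum>Q\<in>Pow B. c2 Q) = 0")
    case False
    then obtain T where "c2 T \<noteq> 0" by (metis sum.neutral)
    then have "shatters {Q. c2 Q \<noteq> 0} {}" unfolding shatters_iff by auto
    then have "card {x} \<le> d" using sh2[of "{}"] by auto
    then show ?thesis by simp
  qed simp
  have "EW (insert x B) c \<le> (\<Sum>Q\<in>Pow B. c2 Q) + d * (\<Sum>Q\<in>Pow B. c1 Q) + (d - 1) * (\<Sum>Q\<in>Pow B. c2 Q)"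
    using split first second IH1 IH2 by linarith
  also have "\<dots> \<le> d * (\<Sum>Q\<in>Pow (insert x B). c Q)"
    unfolding total using dcase
    by (cases d) (auto simp: algebra_simps)
  finally show ?case .
qed


lemma card_filter_real:
  assumes "finite C"
  shows "real (card {S\<in>C. Q S}) = (\<Sum>S\<in>C. if Q S then 1 else 0)"
proof -
  have "real (card {S\<in>C. Q S}) = (\<Sum>S\<in>{S\<in>C. Q S}. (1::real))" by simp
  also have "\<dots> = (\<Sum>S\<in>C. if Q S then 1 else 0)" by (rule sum.inter_filter[OF assms])
  finally show ?thesis .
qed

lemma min_prod_real:
  fixes u v :: nat
  shows "real u * real v \<le> real (min v u) * (real u + real v)"
proof (cases "v \<le> u")
  case True
  then have "real (min v u) = real v" by simp
  then show ?thesis by (simp add: algebra_simps)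
next
  case False
  then have "real (min v u) = real u" by simp
  then show ?thesis by (simp add: algebra_simps)
qed

lemma class_bound:
  fixes C :: "'a set set" and X A' R :: "'a set"
  assumes fX: "finite X" and CX: "C \<subseteq> Pow X" and agree: "\<And>S. S\<in>C \<Longrightarrow> S \<inter> A' = R"
    and sep: "\<And>S T. S\<in>C \<Longrightarrow> T\<in>C \<Longrightarrow> S\<noteq>T \<Longrightarrow> card (symdiff S T) \<ge> \<delta>"
  shows "real \<delta> * (real (card C) - 1) / 2 \<le> real (\<Sum>a\<in>X-A'. min (card {S\<in>C. a\<notin>S}) (card {S\<in>C. a\<in>S}))"
proof (cases "C = {}")
  case True then show ?thesis by simp
next
  case False
  have fC: "finite C" using fX CX by (meson finite_Pow_iff finite_subset)
  define m where "m = card C"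
  have mpos: "m > 0" using False fC unfolding m_def by (simp add: card_gt_0_iff)
  define u where "u a = card {S\<in>C. a\<in>S}" for a
  define v where "v a = card {S\<in>C. a\<notin>S}" for a
  have uv: "u a + v a = m" for a
  proof -
    have "{S\<in>C. a\<in>S} \<union> {S\<in>C. a\<notin>S} = C" "{S\<in>C. a\<in>S} \<inter> {S\<in>C. a\<notin>S} = {}" by auto
    then show ?thesis unfolding u_def v_def m_def using fC
      by (metis (no_types, lifting) card_Un_disjoint finite_Un)
  qed
  have fS: "finite S" if "S \<in> C" for S using that CX fX by (meson PowD finite_subset subsetD)
  have prod: "real (u a) * real (v a) = (\<Sum>S\<in>C. \<Sum>T\<in>C. if a\<in>S \<and> a\<notin>T then 1 else 0)" for a
  proof -
    have "real (u a) * real (v a) = (\<Sum>S\<in>C. if a\<in>S then 1 else 0) * (\<Sum>T\<in>C. if a\<notin>T then (1::real) else 0)"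
      unfolding u_def v_def using card_filter_real[OF fC] by simp
    also have "\<dots> = (\<Sum>S\<in>C. \<Sum>T\<in>C. (if a\<in>S then 1 else 0) * (if a\<notin>T then (1::real) else 0))"
      by (rule sum_product)
    also have "\<dots> = (\<Sum>S\<in>C. \<Sum>T\<in>C. if a\<in>S \<and> a\<notin>T then 1 else 0)"
      by (intro sum.cong refl) auto
    finally show ?thesis .
  qed
  have inner: "(\<Sum>a\<in>X-A'. if a\<in>S \<and> a\<notin>T then 1 else 0) = real (card (S - T))"
    if "S \<in> C" "T \<in> C" for S T
  proof -
    have "S - T = {a\<in>X-A'. a\<in>S \<and> a\<notin>T}"
      using agree[OF that(1)] agree[OF that(2)] that(1) CX by blast
    then show ?thesis using card_filter_real[of "X-A'" "\<lambda>a. a\<in>S \<and> a\<notin>T"] fX by simp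
  qed
  define D where "D S T = real (card (S - T))" for S T :: "'a set"
  have sumuv: "(\<Sum>a\<in>X-A'. real (u a) * real (v a)) = (\<Sum>S\<in>C. \<Sum>T\<in>C. D S T)"
  proof -
    have "(\<Sum>a\<in>X-A'. real (u a) * real (v a)) = (\<Sum>a\<in>X-A'. \<Sum>S\<in>C. \<Sum>T\<in>C. if a\<in>S \<and> a\<notin>T then 1 else 0)"
      using prod by simp
    also have "\<dots> = (\<Sum>S\<in>C. \<Sum>a\<in>X-A'. \<Sum>T\<in>C. if a\<in>S \<and> a\<notin>T then 1 else 0)"
      by (rule sum.swap)
    also have "\<dots> = (\<Sum>S\<in>C. \<Sum>T\<in>C. \<Sum>a\<in>X-A'. if a\<in>S \<and> a\<notin>T then 1 else 0)"
      by (intro sum.cong refl sum.swap)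
    also have "\<dots> = (\<Sum>S\<in>C. \<Sum>T\<in>C. D S T)"
      unfolding D_def by (intro sum.cong refl inner) auto
    finally show ?thesis .
  qed
  have swapD: "(\<Sum>S\<in>C. \<Sum>T\<in>C. D S T) = (\<Sum>S\<in>C. \<Sum>T\<in>C. D T S)"
    by (rule sum.swap)
  have symd: "D S T + D T S = real (card (symdiff S T))" if "S \<in> C" "T \<in> C" for S T
  proof -
    have "card (symdiff S T) = card (S - T) + card (T - S)"
      unfolding symdiff_def using fS[OF that(1)] fS[OF that(2)]
      by (intro card_Un_disjoint) auto
    then show ?thesis unfolding D_def by simp
  qed
  have rowbound: "real (m - 1) * real \<delta> \<le> (\<Sum>T\<in>C. real (card (symdiff S T)))" if "S \<in> C" for S
  proof -
    have "(\<Sum>T\<in>C - {S}. real \<delta>) \<le> (\<Sum>T\<in>C - {S}. real (card (symdiff S T)))"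
      using sep[OF that] by (intro sum_mono) auto
    also have "\<dots> \<le> (\<Sum>T\<in>C. real (card (symdiff S T)))"
      using fC by (intro sum_mono2) auto
    finally show ?thesis using that fC unfolding m_def by (simp add: card_Diff_singleton)
  qed
  have "real m * (real (m - 1) * real \<delta>) \<le> (\<Sum>S\<in>C. \<Sum>T\<in>C. real (card (symdiff S T)))"
    using sum_mono[of C "\<lambda>S. real (m - 1) * real \<delta>", OF rowbound] unfolding m_def by simp
  also have "\<dots> = (\<Sum>S\<in>C. \<Sum>T\<in>C. D S T + D T S)"
    by (intro sum.cong refl) (simp add: symd)
  also have "\<dots> = 2 * (\<Sum>a\<in>X-A'. real (u a) * real (v a))"
    unfolding sum.distrib swapD[symmetric] sumuv by simp
  also have "\<dots> \<le> 2 * (\<Sum>a\<in>X-A'. real (min (v a) (u a)) * real m)"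
  proof (intro mult_left_mono sum_mono)
    fix a
    have "real m = real (u a) + real (v a)" using uv[of a] by (metis of_nat_add)
    then show "real (u a) * real (v a) \<le> real (min (v a) (u a)) * real m"
      using min_prod_real[of "u a" "v a"] by simp
  qed simp
  also have "\<dots> = real m * (2 * (\<Sum>a\<in>X-A'. real (min (v a) (u a))))"
    by (simp add: sum_distrib_right[symmetric])
  finally have "real m * (real (m - 1) * real \<delta>) \<le> real m * (2 * (\<Sum>a\<in>X-A'. real (min (v a) (u a))))" .
  then have "real (m - 1) * real \<delta> \<le> 2 * (\<Sum>a\<in>X-A'. real (min (v a) (u a)))"
    using mpos by (simp add: mult_le_cancel_left_pos)
  moreover have "real (m - 1) = real (card C) - 1" using mpos unfolding m_def by simp
  ultimately have "real \<delta> * (real (card C) - 1) \<le> 2 * (\<Sum>a\<in>X-A'. real (min (v a) (u a)))"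
    by (simp add: mult.commute)
  moreover have "real (\<Sum>a\<in>X-A'. min (v a) (u a)) = (\<Sum>a\<in>X-A'. real (min (v a) (u a)))"
    by (rule of_nat_sum)
  ultimately show ?thesis unfolding u_def v_def by linarith
qed



definition W :: "'a set set \<Rightarrow> 'a set \<Rightarrow> 'a \<Rightarrow> nat" where
  "W P A' a = (\<Sum>R\<in>Pow A'. min (card {S\<in>{S\<in>P. S \<inter> A' = R}. a\<notin>S}) (card {S\<in>{S\<in>P. S \<inter> A' = R}. a\<in>S}))"

lemma sum_fibers:
  assumes "finite P" "finite A" "P \<subseteq> Pow X"
  shows "(\<Sum>R\<in>Pow A. card {S\<in>P. S \<inter> A = R}) = card P"
proof -
  have "(\<Sum>R\<in>Pow A. sum (\<lambda>_. 1::nat) {S. S \<in> P \<and> S \<inter> A = R}) = sum (\<lambda>_. 1) P"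
    using assms by (intro sum.group) auto
  then show ?thesis by simp
qed

lemma lower:
  fixes X A' :: "'a set" and P :: "'a set set"
  assumes fX: "finite X" and PX: "P \<subseteq> Pow X" and A'X: "A' \<subseteq> X"
    and sep: "\<And>S T. S\<in>P \<Longrightarrow> T\<in>P \<Longrightarrow> S\<noteq>T \<Longrightarrow> card (symdiff S T) \<ge> \<delta>"
  shows "real \<delta> * (real (card P) - real (card (proj P A'))) / 2 \<le> (\<Sum>a\<in>X-A'. real (W P A' a))"
proof -
  define C where "C R = {S\<in>P. S \<inter> A' = R}" for R
  have fP: "finite P" using fX PX by (meson finite_Pow_iff finite_subset)
  have fA': "finite A'" using fX A'X finite_subset by blast
  define ind where "ind R = (if C R \<noteq> {} then 1 else (0::real))" for R
  have each: "real \<delta> * (real (card (C R)) - ind R) / 2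
      \<le> real (\<Sum>a\<in>X-A'. min (card {S\<in>C R. a\<notin>S}) (card {S\<in>C R. a\<in>S}))" for R
  proof (cases "C R = {}")
    case True then show ?thesis unfolding ind_def by simp
  next
    case False
    have "real \<delta> * (real (card (C R)) - 1) / 2
      \<le> real (\<Sum>a\<in>X-A'. min (card {S\<in>C R. a\<notin>S}) (card {S\<in>C R. a\<in>S}))"
      by (rule class_bound[OF fX, of "C R" A' R]) (use PX sep in \<open>auto simp: C_def\<close>)
    then show ?thesis using False unfolding ind_def by simp
  qed
  have "(\<Sum>a\<in>X-A'. real (W P A' a))
      = (\<Sum>a\<in>X-A'. \<Sum>R\<in>Pow A'. real (min (card {S\<in>C R. a\<notin>S}) (card {S\<in>C R. a\<in>S})))"
    unfolding W_def C_def by simp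
  also have "\<dots> = (\<Sum>R\<in>Pow A'. \<Sum>a\<in>X-A'. real (min (card {S\<in>C R. a\<notin>S}) (card {S\<in>C R. a\<in>S})))"
    by (rule sum.swap)
  also have "\<dots> = (\<Sum>R\<in>Pow A'. real (\<Sum>a\<in>X-A'. min (card {S\<in>C R. a\<notin>S}) (card {S\<in>C R. a\<in>S})))"
    by simp
  finally have eq1: "(\<Sum>a\<in>X-A'. real (W P A' a)) = \<dots>" .
  have "(\<Sum>R\<in>Pow A'. real \<delta> * (real (card (C R)) - ind R) / 2) \<le> (\<Sum>a\<in>X-A'. real (W P A' a))"
    unfolding eq1 by (intro sum_mono each)
  moreover have "(\<Sum>R\<in>Pow A'. real \<delta> * (real (card (C R)) - ind R) / 2)
      = real \<delta> * ((\<Sum>R\<in>Pow A'. real (card (C R))) - (\<Sum>R\<in>Pow A'. ind R)) / 2"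
    by (simp add: sum_divide_distrib[symmetric] sum_distrib_left[symmetric] sum_subtractf)
  moreover have "(\<Sum>R\<in>Pow A'. real (card (C R))) = real (card P)"
  proof -
    have "(\<Sum>R\<in>Pow A'. card (C R)) = card P" unfolding C_def by (rule sum_fibers[OF fP fA' PX])
    then show ?thesis by (metis of_nat_sum)
  qed
  moreover have "(\<Sum>R\<in>Pow A'. ind R) = real (card (proj P A'))"
  proof -
    have "(\<Sum>R\<in>Pow A'. ind R) = real (card {R\<in>Pow A'. C R \<noteq> {}})"
      unfolding ind_def using card_filter_real[of "Pow A'" "\<lambda>R. C R \<noteq> {}"] fA'
      by (simp add: if_not_P)
    also have "{R\<in>Pow A'. C R \<noteq> {}} = proj P A'"
      unfolding C_def proj_def by blast
    finally show ?thesis .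
  qed
  ultimately show ?thesis by simp
qed

lemma vc_le:
  assumes "finite X" "Y \<subseteq> X" "shatters P Y"
  shows "card Y \<le> vc_dim X P"
  unfolding vc_dim_def
proof (rule cSup_upper)
  show "card Y \<in> {card Y |Y. Y \<subseteq> X \<and> shatters P Y}" using assms by blast
  show "bdd_above {card Y |Y. Y \<subseteq> X \<and> shatters P Y}"
    unfolding bdd_above_def using assms(1) by (auto intro: card_mono)
qed

lemma upper:
  fixes X A :: "'a set" and P :: "'a set set"
  assumes fX: "finite X" and PX: "P \<subseteq> Pow X" and AX: "A \<subseteq> X" and vc: "vc_dim X P \<le> d"
  shows "(\<Sum>a\<in>A. W P (A - {a}) a) \<le> d * card P"
proof -
  have fP: "finite P" using fX PX by (meson finite_Pow_iff finite_subset)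
  have fA: "finite A" using fX AX finite_subset by blast
  define c where "c Q = card {S\<in>P. S \<inter> A = Q}" for Q
  have supp: "{Q. c Q \<noteq> 0} \<subseteq> Pow A"
  proof
    fix Q assume "Q \<in> {Q. c Q \<noteq> 0}"
    then have "c Q \<noteq> 0" by simp
    then have "{S\<in>P. S \<inter> A = Q} \<noteq> {}" unfolding c_def by (metis card.empty)
    then show "Q \<in> Pow A" by blast
  qed
  have sh: "card Y \<le> d" if Y: "Y \<subseteq> A" and shY: "shatters {Q. c Q \<noteq> 0} Y" for Y
  proof -
    have "shatters P Y" unfolding shatters_iff
    proof (intro allI impI)
      fix Z assume "Z \<subseteq> Y"
      then obtain Q where Q: "c Q \<noteq> 0" "Q \<inter> Y = Z" using shY unfolding shatters_iff by blast
      then have "{S\<in>P. S \<inter> A = Q} \<noteq> {}" unfolding c_def by (metis (no_types) card.empty)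
      then obtain S where "S \<in> P" "S \<inter> A = Q" by blast
      then have "S \<inter> Y = Z" using Q(2) Y by blast
      then show "\<exists>S\<in>P. S \<inter> Y = Z" using \<open>S \<in> P\<close> by blast
    qed
    moreover have "Y \<subseteq> X" using Y AX by blast
    ultimately have "card Y \<le> vc_dim X P" using vc_le[OF fX] by blast
    then show ?thesis using vc by linarith
  qed
  have ew: "EW A c \<le> d * (\<Sum>Q\<in>Pow A. c Q)"
    by (rule ew_bound[OF fA supp sh])
  have tot: "(\<Sum>Q\<in>Pow A. c Q) = card P" unfolding c_def by (rule sum_fibers[OF fP fA PX])
  have "EW A c = (\<Sum>a\<in>A. W P (A - {a}) a)"
    unfolding EW_def W_def
  proof (rule sum.cong[OF refl], rule sum.cong[OF refl])
    fix a R assume a: "a \<in> A" and R: "R \<in> Pow (A - {a})"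
    have e1: "{S\<in>P. S \<inter> A = R} = {S\<in>{S\<in>P. S \<inter> (A - {a}) = R}. a\<notin>S}"
      using a R by blast
    have e2: "{S\<in>P. S \<inter> A = insert a R} = {S\<in>{S\<in>P. S \<inter> (A - {a}) = R}. a\<in>S}"
      using a R by blast
    show "min (c R) (c (insert a R)) =
      min (card {S\<in>{S\<in>P. S \<inter> (A - {a}) = R}. a\<notin>S}) (card {S\<in>{S\<in>P. S \<inter> (A - {a}) = R}. a\<in>S})"
      unfolding c_def e1 e2 ..
  qed
  then show ?thesis using ew tot by simp
qed



lemma reindex_pairs:
  fixes X :: "'a set" and g :: "'a set \<Rightarrow> 'a \<Rightarrow> real"
  assumes fX: "finite X" and s: "s \<ge> 1"
  shows "(\<Sum>A'\<in>{A. A \<subseteq> X \<and> card A = s - 1}. \<Sum>a\<in>X - A'. g A' a)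
       = (\<Sum>A\<in>{A. A \<subseteq> X \<and> card A = s}. \<Sum>a\<in>A. g (A - {a}) a)"
proof -
  let ?AA = "{A. A \<subseteq> X \<and> card A = s - 1}"
  let ?BB = "{A. A \<subseteq> X \<and> card A = s}"
  have fAA: "finite ?AA" and fBB: "finite ?BB" using fX by (auto intro: finite_subset[of _ "Pow X"])
  have fin: "finite A" if "A \<subseteq> X" for A using that fX finite_subset by blast
  have h1: "card (insert a A') = s" if "A' \<subseteq> X" "card A' = s - 1" "a \<notin> A'" for A' a
    using that s fin[of A'] by simp
  have h2: "card (A - {a}) = s - 1" if "A \<subseteq> X" "card A = s" "a \<in> A" for A a
    using that by simp
  have "(\<Sum>A'\<in>?AA. \<Sum>a\<in>X - A'. g A' a) = (\<Sum>(A',a)\<in>Sigma ?AA (\<lambda>A'. X - A'). g A' a)"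
    by (rule sum.Sigma) (use fAA fX in auto)
  also have "\<dots> = (\<Sum>(A,a)\<in>Sigma ?BB (\<lambda>A. A). g (A - {a}) a)"
    apply (rule sum.reindex_bij_witness[where j = "\<lambda>(A',a). (insert a A', a)" and i = "\<lambda>(A,a). (A - {a}, a)"])
        apply (auto simp: h1 h2)
    done
  also have "\<dots> = (\<Sum>A\<in>?BB. \<Sum>a\<in>A. g (A - {a}) a)"
    by (rule sum.Sigma[symmetric]) (use fBB fin in auto)
  finally show ?thesis .
qed

theorem lemma1:
  fixes X :: "'a set" and P :: "'a set set" and n d \<delta> s :: nat
  assumes "finite X" and "card X = n"
    and "P \<subseteq> Pow X"
    and "d \<ge> 1" and "\<delta> \<ge> 1"
    and "vc_dim X P \<le> d"
    and "\<And>S T. S \<in> P \<Longrightarrow> T \<in> P \<Longrightarrow> S \<noteq> T \<Longrightarrow> card (symdiff S T) \<ge> \<delta>"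
    and "real s = 4 * real d * real n / real \<delta>"
    and "s \<le> n"
  shows "real (card P) \<le> 2 * measure_pmf.expectation
            (pmf_of_set {A. A \<subseteq> X \<and> card A = s - 1}) (\<lambda>A. real (card (proj P A)))"
proof -
  note fX = assms(1) and cX = assms(2) and PX = assms(3) and sep = assms(7) and sdef = assms(8)
  let ?AA = "{A. A \<subseteq> X \<and> card A = s - 1}"
  let ?BB = "{A. A \<subseteq> X \<and> card A = s}"
  have fAA: "finite ?AA" and fBB: "finite ?BB" using fX by (auto intro: finite_subset[of _ "Pow X"])
  have neAA: "?AA \<noteq> {}"
  proof -
    have "s - 1 \<le> card X" using assms(9) cX by simp
    then obtain T where "T \<subseteq> X" "card T = s - 1" by (meson obtain_subset_with_card_n)
    then show ?thesis by blast
  qed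
  define f where "f A = real (card (proj P A))" for A
  have E: "measure_pmf.expectation (pmf_of_set ?AA) (\<lambda>A. real (card (proj P A)))
      = (\<Sum>A\<in>?AA. f A) / real (card ?AA)"
    unfolding f_def by (rule integral_pmf_of_set[OF neAA fAA])
  have Npos: "real (card ?AA) > 0" using neAA fAA by (simp add: card_gt_0_iff)
  have dpos: "real \<delta> > 0" using assms(5) by simp
  define p where "p = real (card P)"
  define N where "N = real (card ?AA)"
  define Sp where "Sp = (\<Sum>A\<in>?AA. f A)"
  show ?thesis
  proof (cases "s = 0")
    case True
    then have "real d * real n = 0" using sdef dpos by (simp add: field_simps)
    then have "n = 0" using assms(4) by simp
    then have X0: "X = {}" using cX fX by simp
    then have AA: "?AA = {{}}" using True by auto
    have "proj P {} = P" unfolding proj_def using PX X0 by auto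
    then have "Sp = p" unfolding Sp_def AA f_def p_def by simp
    moreover have "N = 1" unfolding N_def AA by simp
    ultimately show ?thesis unfolding E using Sp_def N_def p_def by simp
  next
    case False
    then have s1: "s \<ge> 1" by simp
    have spos: "real s > 0" using s1 by simp
    have sd: "real n * real d = real s * real \<delta> / 4" using sdef dpos by (simp add: field_simps)
    have low: "real \<delta> * (p - f A') / 2 \<le> (\<Sum>a\<in>X - A'. real (W P A' a))" if "A' \<in> ?AA" for A'
      unfolding p_def f_def using lower[OF fX PX _ sep] that by blast
    have up: "(\<Sum>a\<in>A. real (W P (A - {a}) a)) \<le> (\<Sum>a\<in>A. real d * p / real s)" if "A \<in> ?BB" for A
    proof -
      have "(\<Sum>a\<in>A. W P (A - {a}) a) \<le> d * card P" using upper[OF fX PX _ assms(6)] that by blast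
      then have "(\<Sum>a\<in>A. real (W P (A - {a}) a)) \<le> real d * p" unfolding p_def
        by (metis of_nat_le_iff of_nat_mult of_nat_sum)
      also have "\<dots> = (\<Sum>a\<in>A. real d * p / real s)" using that spos by simp
      finally show ?thesis .
    qed
    have "(\<Sum>A'\<in>?AA. real \<delta> * (p - f A') / 2) \<le> (\<Sum>A'\<in>?AA. \<Sum>a\<in>X - A'. real (W P A' a))"
      by (intro sum_mono low)
    also have "\<dots> = (\<Sum>A\<in>?BB. \<Sum>a\<in>A. real (W P (A - {a}) a))"
      by (rule reindex_pairs[OF fX s1])
    also have "\<dots> \<le> (\<Sum>A\<in>?BB. \<Sum>a\<in>A. real d * p / real s)"
      by (intro sum_mono up)
    also have "\<dots> = (\<Sum>A'\<in>?AA. \<Sum>a\<in>X - A'. real d * p / real s)"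
      by (rule reindex_pairs[OF fX s1, symmetric])
    also have "\<dots> = (\<Sum>A'\<in>?AA. real (n - (s - 1)) * (real d * p / real s))"
    proof (intro sum.cong refl)
      fix A' assume "A' \<in> ?AA"
      then have "A' \<subseteq> X" "card A' = s - 1" by auto
      then have "card (X - A') = n - (s - 1)" using cX fX finite_subset[of A' X] by (simp add: card_Diff_subset)
      then show "(\<Sum>a\<in>X - A'. real d * p / real s) = real (n - (s - 1)) * (real d * p / real s)" by simp
    qed
    also have "\<dots> \<le> (\<Sum>A'\<in>?AA. real \<delta> * p / 4)"
    proof (intro sum_mono)
      fix A' assume "A' \<in> ?AA"
      have "real (n - (s - 1)) \<le> real n" by simp
      moreover have "real d * p / real s \<ge> 0" unfolding p_def by simp
      ultimately have "real (n - (s - 1)) * (real d * p / real s) \<le> real n * (real d * p / real s)"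
        by (rule mult_right_mono)
      also have "\<dots> = (real n * real d) * p / real s" by simp
      also have "\<dots> = real \<delta> * p / 4" unfolding sd using spos by simp
      finally show "real (n - (s - 1)) * (real d * p / real s) \<le> real \<delta> * p / 4" .
    qed
    finally have "(\<Sum>A'\<in>?AA. real \<delta> * (p - f A') / 2) \<le> (\<Sum>A'\<in>?AA. real \<delta> * p / 4)" .
    moreover have "(\<Sum>A'\<in>?AA. real \<delta> * (p - f A') / 2) = real \<delta> * (N * p - Sp) / 2"
      unfolding N_def Sp_def
      by (simp add: sum_divide_distrib[symmetric] sum_distrib_left[symmetric] sum_subtractf)
    moreover have "(\<Sum>A'\<in>?AA. real \<delta> * p / 4) = real \<delta> * (N * p) / 4"
      unfolding N_def by simp
    ultimately have "real \<delta> * (N * p - Sp) / 2 \<le> real \<delta> * (N * p) / 4" by linarith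
    then have "N * p - Sp \<le> N * p / 2" using dpos by (simp add: field_simps)
    then have "N * p \<le> 2 * Sp" by simp
    then have "p \<le> 2 * (Sp / N)" using Npos unfolding N_def by (simp add: field_simps)
    then show ?thesis unfolding E p_def Sp_def N_def .
  qed
qed


end
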